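(* Let $\mathcal{K}$ be a convex cone in a finite-dimensional Euclidean space ${\mathbb E}$ and let ${\mathcal F}_t \unlhd \mathcal{K}$ be a face. Consider any sequence constructed as follows: ${\mathcal F}_0=\mathcal{K}$, and as long as there exists a vector $d_i$ with $d_i\in {\mathcal F}_i^*$, $d_i\notin {\mathcal F}_i^{\perp}$ and $d_i\perp {\mathcal F}_t$, choose such a $d_i$ and set ${\mathcal F}_{i+1}={\mathcal F}_i\cap d_i^{\perp}$; stop at the first index $d$ for which no such vector exists. Then this process stops after finitely many steps, and at termination ${\mathcal F}_d={\mathcal F}_t$.
   Context: For a set $S$, $S^*=\{y: \langle y,x\rangle\ge 0\ \forall x\in S\}$ is its dual cone and $S^\perp$ its orthogonal complement; $d\perp S$ means $\langle d,x\rangle=0$ for all $x\in S$. A face $f\unlhd \mathcal{K}$ is a convex subset $f\subseteq\mathcal{K}$ such that $x,y\in\mathcal{K}$, $\tfrac12(x+y)\in f$ imply $x,y\in f$. *)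

theory Defs
  imports "HOL-Analysis.Analysis"
begin

definition dual_cone :: "'a::real_inner set \<Rightarrow> 'a set" where
  "dual_cone S = {y. \<forall>x\<in>S. 0 \<le> inner y x}"

definition orth_compl :: "'a::real_inner set \<Rightarrow> 'a set" where
  "orth_compl S = {y. \<forall>x\<in>S. inner y x = 0}"

definition perp_to :: "'a::real_inner \<Rightarrow> 'a set \<Rightarrow> bool" where
  "perp_to d S \<longleftrightarrow> (\<forall>x\<in>S. inner d x = 0)"

definition fr_admissible :: "'a::real_inner set \<Rightarrow> 'a set \<Rightarrow> 'a \<Rightarrow> bool" where
  "fr_admissible Ft F d \<longleftrightarrow> d \<in> dual_cone F \<and> d \<notin> orth_compl F \<and> perp_to d Ft"

definition fr_step :: "'a::real_inner set \<Rightarrow> 'a set \<Rightarrow> 'a \<Rightarrow> 'a set \<Rightarrow> bool" where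
  "fr_step Ft F d F' \<longleftrightarrow> fr_admissible Ft F d \<and> F' = F \<inter> orth_compl {d}"

end

theory Submission
  imports Defs
begin

lemma step_face:
  fixes K :: "'a::euclidean_space set"
  assumes "fr_step Ft F d F'" "F face_of K" "Ft \<subseteq> F"
  shows "F' face_of K \<and> Ft \<subseteq> F' \<and> F' \<noteq> F"
proof -
  have F': "F' = F \<inter> {x. d \<bullet> x = 0}"
    using assms(1) by (auto simp: fr_step_def orth_compl_def inner_commute)
  have adm: "fr_admissible Ft F d" using assms(1) fr_step_def by blast
  have ge: "\<And>x. x \<in> F \<Longrightarrow> d \<bullet> x \<ge> 0" using adm by (auto simp: fr_admissible_def dual_cone_def)
  have cF: "convex F" using assms(2) face_of_imp_convex by blast
  have "F' face_of F" unfolding F' using face_of_Int_supporting_hyperplane_ge[OF cF ge] by simp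
  hence "F' face_of K" using face_of_trans assms(2) by blast
  moreover have "Ft \<subseteq> F'" using adm assms(3) by (auto simp: F' fr_admissible_def perp_to_def)
  moreover have "F' \<noteq> F"
    using adm by (auto simp: F' fr_admissible_def orth_compl_def)
  ultimately show ?thesis by blast
qed

lemma seq_face:
  fixes K :: "'a::euclidean_space set"
  assumes "convex K" "Ft face_of K" "F 0 = K" "\<forall>i<n. fr_step Ft (F i) (d i) (F (Suc i))"
  shows "F n face_of K \<and> Ft \<subseteq> F n \<and> aff_dim (F n) + int n \<le> aff_dim K"
  using assms(4)
proof (induction n)
  case 0
  have "Ft \<subseteq> K" using assms(2) face_of_imp_subset by blast
  then show ?case using assms face_of_refl by auto
next
  case (Suc n)
  then have IH: "F n face_of K" "Ft \<subseteq> F n" "aff_dim (F n) + int n \<le> aff_dim K" by auto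
  have st: "fr_step Ft (F n) (d n) (F (Suc n))" using Suc.prems by auto
  from step_face[OF st IH(1,2)] have A: "F (Suc n) face_of K" "Ft \<subseteq> F (Suc n)" "F (Suc n) \<noteq> F n" by auto
  have sub: "F (Suc n) \<subseteq> F n" using st by (auto simp: fr_step_def)
  have "F (Suc n) face_of F n" using face_of_subset[OF A(1) sub face_of_imp_subset[OF IH(1)]] .
  hence "aff_dim (F (Suc n)) < aff_dim (F n)"
    using face_of_aff_dim_lt[OF face_of_imp_convex[OF IH(1)]] A(3) by blast
  with IH A show ?case by auto
qed

lemma face_cone:
  fixes K :: "'a::euclidean_space set"
  assumes "cone K" "F face_of K" "x \<in> F"
  shows "0 \<in> F \<and> 2 *\<^sub>R x \<in> F"
proof (cases "x = 0")
  case True then show ?thesis using assms by simp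
next
  case False
  have xK: "x \<in> K" using assms face_of_imp_subset by blast
  have K: "0 \<in> K" "2 *\<^sub>R x \<in> K" using assms(1) xK unfolding cone_def by (metis scale_zero_left order_refl, simp)
  have "midpoint 0 (2 *\<^sub>R x) = x" by (simp add: midpoint_def)
  hence "x \<in> open_segment 0 (2 *\<^sub>R x)" using False by (metis midpoint_in_open_segment midpoint_eq_endpoint(1))
  then show ?thesis using assms(2) K assms(3) unfolding face_of_def by blast
qed

lemma final:
  fixes K :: "'a::euclidean_space set"
  assumes "cone K" "Fn face_of K" "Ft face_of K" "Ft \<noteq> {}" "Ft \<subseteq> Fn"
    and "\<not> (\<exists>v. fr_admissible Ft Fn v)"
  shows "Fn = Ft"
proof (rule ccontr)
  assume ne: "Fn \<noteq> Ft"
  have tf: "Ft face_of Fn" using face_of_subset[OF assms(3) assms(5) face_of_imp_subset[OF assms(2)]] .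
  have cFt: "convex Ft" using assms(3) face_of_imp_convex by blast
  have cFn: "convex Fn" using assms(2) face_of_imp_convex by blast
  obtain x where x: "x \<in> rel_interior Ft" using rel_interior_eq_empty cFt assms(4) by blast
  have xFt: "x \<in> Ft" using x rel_interior_subset by blast
  have xFn: "x \<in> Fn" using xFt assms(5) by blast
  have "x \<notin> rel_interior Fn" using face_of_disjoint_rel_interior[OF tf] ne xFt by blast
  then obtain a where a: "\<And>y. y \<in> Fn \<Longrightarrow> a \<bullet> x \<le> a \<bullet> y"
      "\<And>y. y \<in> rel_interior Fn \<Longrightarrow> a \<bullet> x < a \<bullet> y"
    using supporting_hyperplane_rel_boundary[OF cFn xFn] by metis
  have c: "0 \<in> Fn" "2 *\<^sub>R x \<in> Fn" using face_cone[OF assms(1,2) xFn] by auto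
  have ax: "a \<bullet> x = 0" using a(1)[OF c(1)] a(1)[OF c(2)] by simp
  have dual: "a \<in> dual_cone Fn" using a(1) ax by (auto simp: dual_cone_def)
  obtain y where y: "y \<in> rel_interior Fn" using rel_interior_eq_empty cFn xFn by blast
  have "y \<in> Fn" using y rel_interior_subset by blast
  hence notperp: "a \<notin> orth_compl Fn" using a(2)[OF y] ax unfolding orth_compl_def by force
  have ge: "\<And>z. z \<in> Ft \<Longrightarrow> a \<bullet> z \<ge> 0" using dual assms(5) by (auto simp: dual_cone_def)
  have hf: "(Ft \<inter> {z. a \<bullet> z = 0}) face_of Ft" using face_of_Int_supporting_hyperplane_ge[OF cFt ge] by simp
  have "Ft \<inter> {z. a \<bullet> z = 0} = Ft"
  proof (rule ccontr)
    assume "Ft \<inter> {z. a \<bullet> z = 0} \<noteq> Ft"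
    from face_of_disjoint_rel_interior[OF hf this] x xFt ax show False by blast
  qed
  hence "perp_to a Ft" by (auto simp: perp_to_def)
  with dual notperp assms(6) show False by (auto simp: fr_admissible_def)
qed

theorem mainTheorem1:
  fixes K Ft :: "'a::euclidean_space set"
  assumes "convex K" and "cone K"
    and "Ft face_of K" and "Ft \<noteq> {}"
  shows "\<not> (\<exists>F d. F 0 = K \<and> (\<forall>i. fr_step Ft (F i) (d i) (F (Suc i))))
       \<and> (\<forall>F d n. F 0 = K \<and> (\<forall>i<n. fr_step Ft (F i) (d i) (F (Suc i)))
              \<and> \<not> (\<exists>v. fr_admissible Ft (F n) v) \<longrightarrow> F n = Ft)"
proof (intro conjI allI impI notI)
  fix F d n
  assume h: "F 0 = K \<and> (\<forall>i<n. fr_step Ft (F i) (d i) (F (Suc i))) \<and> \<not> (\<exists>v. fr_admissible Ft (F n) v)"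
  have "F n face_of K \<and> Ft \<subseteq> F n" using seq_face[OF assms(1,3)] h by blast
  then show "F n = Ft" using final[OF assms(2) _ assms(3,4)] h by blast
next
  assume "\<exists>F d. F 0 = K \<and> (\<forall>i. fr_step Ft (F i) (d i) (F (Suc i)))"
  then obtain F d where h: "F 0 = K" "\<forall>i. fr_step Ft (F i) (d i) (F (Suc i))" by blast
  define n where "n = nat (aff_dim K + 2)"
  have "aff_dim (F n) + int n \<le> aff_dim K" using seq_face[OF assms(1,3), of F n d] h by blast
  moreover have "aff_dim (F n) \<ge> -1" by (rule aff_dim_geq)
  moreover have "int n \<ge> aff_dim K + 2" unfolding n_def by simp
  ultimately show False by simp
qed

end
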